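(* Let $p$ be a prime and let $\Psi\colon\mathbb{Z}_p\times\mathbb{Z}_p\to\operatorname{Aut}\mathbb{Z}_{p^2}$ be a group homomorphism. Then for any $b_1,b_p\in\mathbb{Z}_p\times\mathbb{Z}_p$ there is at most one relative Rota--Baxter operator $B\colon\mathbb{Z}_{p^2}\to\mathbb{Z}_p\times\mathbb{Z}_p$ with respect to $(\mathbb{Z}_p\times\mathbb{Z}_p,\Psi)$ such that $B(1)=b_1$ and $B(p)=b_p$. Moreover, if $p>2$, then every relative Rota--Baxter operator $B\colon\mathbb{Z}_{p^2}\to\mathbb{Z}_p\times\mathbb{Z}_p$ with respect to $(\mathbb{Z}_p\times\mathbb{Z}_p,\Psi)$ is a group homomorphism.
   Context: $\mathbb{Z}_m$ denotes the cyclic group of order $m$, written additively. A relative Rota--Baxter operator on $H$ with respect to $(G,\Psi)$, where $\Psi\colon G\to\operatorname{Aut}H$ is a homomorphism, is a map $B\colon H\to G$ with $B(h)B(k)=B(h\Psi_{B(h)}(k))$ for all $h,k\in H$; here in additive notation: $B(h)+B(k)=B(h+\Psi_{B(h)}(k))$. *)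

theory Defs
  imports "HOL-Algebra.Algebra"
begin

definition rel_RB_operator ::
  "('a, 'c) monoid_scheme \<Rightarrow> ('b, 'd) monoid_scheme \<Rightarrow> ('b \<Rightarrow> 'a \<Rightarrow> 'a) \<Rightarrow> ('a \<Rightarrow> 'b) \<Rightarrow> bool"
  where "rel_RB_operator H G Psi B \<longleftrightarrow>
     B \<in> carrier H \<rightarrow> carrier G \<and>
     (\<forall>h \<in> carrier H. \<forall>k \<in> carrier H.
        B h \<otimes>\<^bsub>G\<^esub> B k = B (h \<otimes>\<^bsub>H\<^esub> Psi (B h) k))"

end

theory Submission
  imports Defs "HOL-Number_Theory.Number_Theory"
begin


lemma fermat_int:
  fixes u :: int and p :: nat
  assumes "Factorial_Ring.prime p" "[u ^ p = 1] (mod int p)"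
  shows "[u = 1] (mod int p)"
proof -
  define v where "v = nat (u mod int p)"
  have p1: "p > 1" using assms(1) prime_gt_1_nat by blast
  have vu: "int v = u mod int p" using p1 by (simp add: v_def)
  have vp: "v < p" using p1 v_def by (simp add: nat_less_iff)
  have "[int v = u] (mod int p)" using vu by (simp add: cong_def)
  hence "[int v ^ p = u ^ p] (mod int p)" by (rule cong_pow)
  hence c1: "[int v ^ p = 1] (mod int p)" using assms(2) by (rule cong_trans)
  hence "[int (v ^ p) = int 1] (mod int p)" by simp
  hence c1': "[v ^ p = 1] (mod p)" by (simp only: cong_int_iff)
  have nd: "\<not> p dvd v"
  proof
    assume "p dvd v"
    hence "v = 0" using vp by (metis dvd_imp_le leD neq0_conv)
    hence "[0 = 1] (mod p)" using c1' p1 by (simp add: power_0_left)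
    thus False using p1 by (simp add: cong_def)
  qed
  have f: "[v ^ (p - 1) = 1] (mod p)" using fermat_theorem[OF assms(1) nd] .
  have e: "v ^ p = v * v ^ (p - 1)" using p1 by (metis Suc_diff_1 less_imp_le_nat power_Suc zero_less_one le_less_trans)
  have "[v * v ^ (p - 1) = v * 1] (mod p)" using f by (rule cong_scalar_left)
  hence "[v ^ p = v] (mod p)" using e by simp
  hence "[v = 1] (mod p)" using c1' cong_sym cong_trans by blast
  hence "[int v = int 1] (mod int p)" by (simp only: cong_int_iff)
  thus ?thesis using vu by (simp add: cong_def)
qed

lemma aut_linear:
  assumes "\<sigma> \<in> hom (integer_mod_group n) (integer_mod_group n)" "n > 1" "k \<in> {0..<int n}"
  shows "\<sigma> k = (\<sigma> 1 * k) mod int n"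
proof -
  interpret group_hom "integer_mod_group n" "integer_mod_group n" \<sigma>
    by (simp add: group_hom_def group_hom_axioms_def assms)
  have c: "carrier (integer_mod_group n) = {0..<int n}" using assms by (simp add: carrier_integer_mod_group)
  have s0: "\<sigma> 0 = 0" using hom_one by simp
  have "int m < int n \<longrightarrow> \<sigma> (int m) = (\<sigma> 1 * int m) mod int n" for m
  proof (induction m)
    case 0 then show ?case using s0 by simp
  next
    case (Suc m)
    show ?case
    proof
      assume a: "int (Suc m) < int n"
      have m1: "int m \<in> carrier (integer_mod_group n)" "1 \<in> carrier (integer_mod_group n)" using a c assms by auto
      have "int m \<otimes>\<^bsub>integer_mod_group n\<^esub> 1 = int (Suc m)" using a by simp
      hence "\<sigma> (int (Suc m)) = \<sigma> (int m) \<otimes>\<^bsub>integer_mod_group n\<^esub> \<sigma> 1"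
        using hom_mult[OF m1] by simp
      also have "\<dots> = ((\<sigma> 1 * int m) mod int n + \<sigma> 1) mod int n" using Suc a by simp
      also have "\<dots> = (\<sigma> 1 * int (Suc m)) mod int n" by (simp add: mod_add_left_eq mod_add_right_eq algebra_simps)
      finally show "\<sigma> (int (Suc m)) = (\<sigma> 1 * int (Suc m)) mod int n" .
    qed
  qed
  moreover have "k = int (nat k)" using assms(3) by simp
  ultimately show ?thesis using assms(3) by (metis atLeastLessThan_iff)
qed

lemma AutoGroup_mult:
  assumes "x \<in> auto G" "y \<in> auto G"
  shows "x \<otimes>\<^bsub>AutoGroup G\<^esub> y = compose (carrier G) x y"
proof -
  have "x \<in> Bij (carrier G)" "y \<in> Bij (carrier G)" using assms by (auto simp: auto_def)
  thus ?thesis by (simp add: AutoGroup_def BijGroup_def)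
qed

lemma pow_auto:
  assumes "\<sigma> \<in> auto (integer_mod_group n)" "n > 1"
  shows "(\<sigma> [^]\<^bsub>AutoGroup (integer_mod_group n)\<^esub> (m::nat)) 1 = (\<sigma> 1 ^ m) mod int n"
proof (induction m)
  case 0
  have "one (AutoGroup (integer_mod_group n)) = (\<lambda>x\<in>carrier (integer_mod_group n). x)"
    by (simp add: AutoGroup_def BijGroup_def)
  moreover have "1 \<in> carrier (integer_mod_group n)" using assms by simp
  ultimately show ?case using assms by simp
next
  case (Suc m)
  let ?A = "AutoGroup (integer_mod_group n)"
  let ?S = "carrier (integer_mod_group n)"
  have gA: "group ?A" by (simp add: group.AutoGroup)
  have cA: "carrier ?A = auto (integer_mod_group n)" by (simp add: AutoGroup_def BijGroup_def)
  have pm: "\<sigma> [^]\<^bsub>?A\<^esub> m \<in> auto (integer_mod_group n)"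
    using monoid.nat_pow_closed[OF group.is_monoid[OF gA]] assms(1) cA by blast
  have c: "?S = {0..<int n}" using assms by (simp add: carrier_integer_mod_group)
  have one: "1 \<in> ?S" using assms by simp
  have s1: "\<sigma> 1 \<in> {0..<int n}" using assms(1) one c unfolding auto_def hom_def by blast
  have hm: "\<sigma> [^]\<^bsub>?A\<^esub> m \<in> hom (integer_mod_group n) (integer_mod_group n)" using pm by (simp add: auto_def)
  have "\<sigma> [^]\<^bsub>?A\<^esub> Suc m = (\<sigma> [^]\<^bsub>?A\<^esub> m) \<otimes>\<^bsub>?A\<^esub> \<sigma>" by (rule nat_pow_Suc)
  also have "\<dots> = compose ?S (\<sigma> [^]\<^bsub>?A\<^esub> m) \<sigma>" using AutoGroup_mult[OF pm assms(1)] .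
  finally have "(\<sigma> [^]\<^bsub>?A\<^esub> Suc m) 1 = (\<sigma> [^]\<^bsub>?A\<^esub> m) (\<sigma> 1)"
    using one by (simp add: compose_def)
  also have "\<dots> = ((\<sigma> [^]\<^bsub>?A\<^esub> m) 1 * \<sigma> 1) mod int n"
    using aut_linear[OF hm assms(2) s1] .
  also have "\<dots> = (\<sigma> 1 ^ Suc m) mod int n" using Suc by (simp add: mod_mult_left_eq mod_mult_right_eq algebra_simps)
  finally show ?case .
qed

lemma DirProd_pow:
  "(a, b) [^]\<^bsub>G \<times>\<times> H\<^esub> (m::nat) = (a [^]\<^bsub>G\<^esub> m, b [^]\<^bsub>H\<^esub> m)"
  by (induction m) auto

lemma psi_unit:
  assumes "Factorial_Ring.prime p"
    and "Psi \<in> hom (integer_mod_group p \<times>\<times> integer_mod_group p) (AutoGroup (integer_mod_group (p ^ 2)))"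
    and "g \<in> carrier (integer_mod_group p \<times>\<times> integer_mod_group p)"
  shows "[Psi g 1 = 1] (mod int p)"
    and "\<forall>k\<in>carrier (integer_mod_group (p ^ 2)). Psi g k = (Psi g 1 * k) mod int (p ^ 2)"
proof -
  let ?G = "integer_mod_group p \<times>\<times> integer_mod_group p"
  let ?A = "AutoGroup (integer_mod_group (p ^ 2))"
  have p1: "p > 1" using assms(1) prime_gt_1_nat by blast
  have n1: "p ^ 2 > 1" using p1 by (metis one_less_power zero_less_numeral)
  have gG: "group ?G" by (simp add: DirProd_group)
  have gA: "group ?A" by (simp add: group.AutoGroup)
  have cA: "carrier ?A = auto (integer_mod_group (p ^ 2))" by (simp add: AutoGroup_def BijGroup_def)
  have "Psi \<in> carrier ?G \<rightarrow> carrier ?A" using assms(2) by (simp add: hom_def)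
  hence "Psi g \<in> carrier ?A" using assms(3) by (rule funcset_mem)
  hence Pg: "Psi g \<in> auto (integer_mod_group (p ^ 2))" using cA by simp
  have hPg: "Psi g \<in> hom (integer_mod_group (p ^ 2)) (integer_mod_group (p ^ 2))" using Pg by (simp add: auto_def)
  show "\<forall>k\<in>carrier (integer_mod_group (p ^ 2)). Psi g k = (Psi g 1 * k) mod int (p ^ 2)"
  proof
    fix k assume "k \<in> carrier (integer_mod_group (p ^ 2))"
    hence "k \<in> {0..<int (p ^ 2)}" using p1 by (simp add: carrier_integer_mod_group)
    thus "Psi g k = (Psi g 1 * k) mod int (p ^ 2)" by (rule aut_linear[OF hPg n1])
  qed
  interpret gh: group_hom ?G ?A Psi using gG gA assms(2) by (simp add: group_hom_def group_hom_axioms_def)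
  obtain a b where ab: "g = (a, b)" by (cases g)
  have "g [^]\<^bsub>?G\<^esub> p = (a [^]\<^bsub>integer_mod_group p\<^esub> p, b [^]\<^bsub>integer_mod_group p\<^esub> p)"
    by (simp only: ab DirProd_pow)
  also have "\<dots> = \<one>\<^bsub>?G\<^esub>" by simp
  finally have gp: "g [^]\<^bsub>?G\<^esub> p = \<one>\<^bsub>?G\<^esub>" .
  have "Psi g [^]\<^bsub>?A\<^esub> p = Psi (g [^]\<^bsub>?G\<^esub> p)" using gh.hom_nat_pow[OF assms(3)] by simp
  also have "\<dots> = \<one>\<^bsub>?A\<^esub>" using gp gh.hom_one by simp
  also have "\<dots> = (\<lambda>x\<in>carrier (integer_mod_group (p ^ 2)). x)" by (simp add: AutoGroup_def BijGroup_def)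
  finally have "(Psi g [^]\<^bsub>?A\<^esub> p) 1 = 1" using n1 p1 by simp
  hence "(Psi g 1 ^ p) mod int (p ^ 2) = 1" using pow_auto[OF Pg n1] by simp
  moreover have n1i: "(int p) ^ 2 > 1" using n1 by (metis of_nat_1 of_nat_less_iff of_nat_power)
  ultimately have "[Psi g 1 ^ p = 1] (mod int (p ^ 2))" by (simp add: cong_def)
  hence "[Psi g 1 ^ p = 1] (mod int p)" by (rule cong_dvd_modulus) simp
  thus "[Psi g 1 = 1] (mod int p)" using fermat_int[OF assms(1)] by blast
qed

lemma carrier_H:
  assumes "p > 0"
  shows "x \<in> carrier (integer_mod_group (p ^ 2)) \<longleftrightarrow> 0 \<le> x \<and> x < (int p) ^ 2"
  using assms by (simp add: carrier_integer_mod_group)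

lemma mod_in_H:
  assumes "p > 0"
  shows "x mod (int p) ^ 2 \<in> carrier (integer_mod_group (p ^ 2))"
  using assms by (simp add: carrier_H)

lemma psi_t:
  assumes "Factorial_Ring.prime p"
    and "Psi \<in> hom (integer_mod_group p \<times>\<times> integer_mod_group p) (AutoGroup (integer_mod_group (p ^ 2)))"
    and "g \<in> carrier (integer_mod_group p \<times>\<times> integer_mod_group p)"
  shows "\<exists>t. \<forall>k\<in>carrier (integer_mod_group (p ^ 2)). \<forall>a.
           (a + Psi g k) mod (int p) ^ 2 = (a + k + int p * t * k) mod (int p) ^ 2"
proof -
  have c: "[Psi g 1 = 1] (mod int p)" by (rule psi_unit(1)[OF assms])
  have l: "\<forall>k\<in>carrier (integer_mod_group (p ^ 2)). Psi g k = (Psi g 1 * k) mod int (p ^ 2)"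
    by (rule psi_unit(2)[OF assms])
  from c have "int p dvd Psi g 1 - 1" by (simp add: cong_iff_dvd_diff)
  then obtain t where t: "Psi g 1 - 1 = int p * t" by (auto simp: dvd_def)
  have "(a + Psi g k) mod (int p) ^ 2 = (a + k + int p * t * k) mod (int p) ^ 2"
    if "k \<in> carrier (integer_mod_group (p ^ 2))" for k a
  proof -
    have "Psi g 1 = 1 + int p * t" using t by simp
    hence "Psi g k = ((1 + int p * t) * k) mod (int p) ^ 2" using l that by simp
    hence "(a + Psi g k) mod (int p) ^ 2 = (a + (1 + int p * t) * k) mod (int p) ^ 2"
      by (simp add: mod_add_right_eq)
    thus ?thesis by (simp add: algebra_simps)
  qed
  thus ?thesis by blast
qed

lemma rb_zero:
  assumes "Factorial_Ring.prime p"
    and "Psi \<in> hom (integer_mod_group p \<times>\<times> integer_mod_group p) (AutoGroup (integer_mod_group (p ^ 2)))"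
    and "rel_RB_operator (integer_mod_group (p ^ 2)) (integer_mod_group p \<times>\<times> integer_mod_group p) Psi B"
  shows "B 0 = \<one>\<^bsub>integer_mod_group p \<times>\<times> integer_mod_group p\<^esub>"
proof -
  let ?G = "integer_mod_group p \<times>\<times> integer_mod_group p"
  let ?H = "integer_mod_group (p ^ 2)"
  have p0: "p > 0" using assms(1) prime_gt_0_nat by blast
  have gG: "group ?G" by (simp add: DirProd_group)
  have z: "0 \<in> carrier ?H" by simp
  have Bc: "B \<in> carrier ?H \<rightarrow> carrier ?G" and rb: "\<forall>h\<in>carrier ?H. \<forall>k\<in>carrier ?H. B h \<otimes>\<^bsub>?G\<^esub> B k = B (h \<otimes>\<^bsub>?H\<^esub> Psi (B h) k)"
    using assms(3) by (auto simp: rel_RB_operator_def)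
  have B0: "B 0 \<in> carrier ?G" using Bc z by blast
  obtain t where t: "\<forall>k\<in>carrier ?H. \<forall>a. (a + Psi (B 0) k) mod (int p) ^ 2 = (a + k + int p * t * k) mod (int p) ^ 2"
    using psi_t[OF assms(1,2) B0] by blast
  have "B 0 \<otimes>\<^bsub>?G\<^esub> B 0 = B ((0 + Psi (B 0) 0) mod int (p ^ 2))" using rb z by simp
  also have "(0 + Psi (B 0) 0) mod int (p ^ 2) = 0"
  proof -
    have "(0 + Psi (B 0) 0) mod (int p) ^ 2 = (0 + 0 + int p * t * 0) mod (int p) ^ 2" using t z by blast
    thus ?thesis by simp
  qed
  finally have "B 0 \<otimes>\<^bsub>?G\<^esub> B 0 = B 0" .
  thus ?thesis using group.l_cancel_one[OF gG B0 B0] by simp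
qed

fun Fseq :: "int \<Rightarrow> nat \<Rightarrow> int" where
  "Fseq u 0 = 0"
| "Fseq u (Suc n) = 1 + u * Fseq u n"

fun Dseq :: "nat \<Rightarrow> nat" where
  "Dseq 0 = 0"
| "Dseq (Suc n) = Dseq n + n"

lemma Dseq_twice: "2 * Dseq n = n * (n - 1)"
  by (induction n) (auto simp: algebra_simps)

lemma Fseq_modp: "[Fseq (1 + int p * t) n = int n] (mod int p)"
proof (induction n)
  case 0 then show ?case by simp
next
  case (Suc n)
  have "Fseq (1 + int p * t) (Suc n) = (1 + Fseq (1 + int p * t) n) + int p * (t * Fseq (1 + int p * t) n)"
    by (simp add: algebra_simps)
  also have "[\<dots> = (1 + Fseq (1 + int p * t) n) + 0] (mod int p)"
    by (intro cong_add cong_refl) (simp add: cong_def)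
  also have "[(1 + Fseq (1 + int p * t) n) + 0 = 1 + int n] (mod int p)"
    using Suc by (simp add: cong_add)
  finally show ?case by (simp add: add.commute)
qed

lemma Fseq_modN: "[Fseq (1 + int p * t) n = int n + int p * t * int (Dseq n)] (mod (int p) ^ 2)"
proof (induction n)
  case 0 then show ?case by simp
next
  case (Suc n)
  let ?u = "1 + int p * t"
  have "[Fseq ?u (Suc n) = 1 + ?u * (int n + int p * t * int (Dseq n))] (mod (int p) ^ 2)"
    using Suc by (simp add: cong_add cong_mult)
  also have "1 + ?u * (int n + int p * t * int (Dseq n))
      = int (Suc n) + int p * t * int (Dseq (Suc n)) + (int p) ^ 2 * (t * t * int (Dseq n))"
    by (simp add: algebra_simps power2_eq_square)
  also have "[\<dots> = int (Suc n) + int p * t * int (Dseq (Suc n))] (mod (int p) ^ 2)"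
    by (simp add: cong_def)
  finally show ?case .
qed

lemma modlem:
  fixes N :: int
  shows "(c + x mod N + q * (x mod N)) mod N = (c + x + q * x) mod N"
proof -
  have "[c + x mod N + q * (x mod N) = c + x + q * x] (mod N)"
    by (intro cong_add cong_mult cong_refl) (simp_all add: cong_def)
  thus ?thesis by (simp add: cong_def)
qed

lemma rb_unfold:
  assumes "rel_RB_operator (integer_mod_group (p ^ 2)) (integer_mod_group p \<times>\<times> integer_mod_group p) Psi B"
  shows "B \<in> carrier (integer_mod_group (p ^ 2)) \<rightarrow> carrier (integer_mod_group p \<times>\<times> integer_mod_group p)"
    and "\<And>h k. h \<in> carrier (integer_mod_group (p ^ 2)) \<Longrightarrow> k \<in> carrier (integer_mod_group (p ^ 2)) \<Longrightarrow>
          B h \<otimes>\<^bsub>integer_mod_group p \<times>\<times> integer_mod_group p\<^esub> B k = B ((h + Psi (B h) k) mod (int p) ^ 2)"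
  using assms by (auto simp: rel_RB_operator_def)

lemma rb_step:
  assumes "Factorial_Ring.prime p"
    and "Psi \<in> hom (integer_mod_group p \<times>\<times> integer_mod_group p) (AutoGroup (integer_mod_group (p ^ 2)))"
    and "rel_RB_operator (integer_mod_group (p ^ 2)) (integer_mod_group p \<times>\<times> integer_mod_group p) Psi B"
    and "h \<in> carrier (integer_mod_group (p ^ 2))"
  shows "\<exists>t. \<forall>k\<in>carrier (integer_mod_group (p ^ 2)).
     B h \<otimes>\<^bsub>integer_mod_group p \<times>\<times> integer_mod_group p\<^esub> B k = B ((h + k + int p * t * k) mod (int p) ^ 2)"
proof -
  have "B h \<in> carrier (integer_mod_group p \<times>\<times> integer_mod_group p)"
    using rb_unfold(1)[OF assms(3)] assms(4) by blast
  then obtain t where t: "\<forall>k\<in>carrier (integer_mod_group (p ^ 2)). \<forall>a.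
           (a + Psi (B h) k) mod (int p) ^ 2 = (a + k + int p * t * k) mod (int p) ^ 2"
    using psi_t[OF assms(1,2)] by blast
  have "B h \<otimes>\<^bsub>integer_mod_group p \<times>\<times> integer_mod_group p\<^esub> B k = B ((h + k + int p * t * k) mod (int p) ^ 2)"
    if "k \<in> carrier (integer_mod_group (p ^ 2))" for k
    using rb_unfold(2)[OF assms(3) assms(4) that] t that by simp
  thus ?thesis by blast
qed

lemma part1:
  assumes "Factorial_Ring.prime p"
    and "Psi \<in> hom (integer_mod_group p \<times>\<times> integer_mod_group p) (AutoGroup (integer_mod_group (p ^ 2)))"
    and rb1: "rel_RB_operator (integer_mod_group (p ^ 2)) (integer_mod_group p \<times>\<times> integer_mod_group p) Psi B1"
    and rb2: "rel_RB_operator (integer_mod_group (p ^ 2)) (integer_mod_group p \<times>\<times> integer_mod_group p) Psi B2"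
    and e1: "B1 1 = B2 1" and ep: "B1 (int p) = B2 (int p)"
    and hc: "h \<in> carrier (integer_mod_group (p ^ 2))"
  shows "B1 h = B2 h"
proof -
  let ?G = "integer_mod_group p \<times>\<times> integer_mod_group p"
  let ?H = "integer_mod_group (p ^ 2)"
  let ?N = "(int p) ^ 2"
  have p1: "p > 1" using assms(1) prime_gt_1_nat by blast
  hence p0: "p > 0" by simp
  have pN: "int p < ?N" using p1 by (simp add: power2_eq_square)
  have one: "1 \<in> carrier ?H" using p1 by (simp add: carrier_H power2_eq_square)
  have pc: "int p \<in> carrier ?H" using p1 pN by (simp add: carrier_H)
  obtain t1 where t1: "\<forall>k\<in>carrier ?H. B1 1 \<otimes>\<^bsub>?G\<^esub> B1 k = B1 ((1 + k + int p * t1 * k) mod ?N)"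
    using rb_step[OF assms(1,2) rb1 one] by blast
  obtain t1' where t1': "\<forall>k\<in>carrier ?H. B2 1 \<otimes>\<^bsub>?G\<^esub> B2 k = B2 ((1 + k + int p * t1' * k) mod ?N)"
    using rb_step[OF assms(1,2) rb2 one] by blast
  obtain tp where tp: "\<forall>k\<in>carrier ?H. B1 (int p) \<otimes>\<^bsub>?G\<^esub> B1 k = B1 ((int p + k + int p * tp * k) mod ?N)"
    using rb_step[OF assms(1,2) rb1 pc] by blast
  obtain tp' where tp': "\<forall>k\<in>carrier ?H. B2 (int p) \<otimes>\<^bsub>?G\<^esub> B2 k = B2 ((int p + k + int p * tp' * k) mod ?N)"
    using rb_step[OF assms(1,2) rb2 pc] by blast
  have b1c: "B1 1 \<in> carrier ?G" using rb_unfold(1)[OF rb1] one by blast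
  have bpc: "B1 (int p) \<in> carrier ?G" using rb_unfold(1)[OF rb1] pc by blast
  obtain s1 where s1: "\<forall>k\<in>carrier ?H. \<forall>a. (a + Psi (B1 1) k) mod ?N = (a + k + int p * s1 * k) mod ?N"
    using psi_t[OF assms(1,2) b1c] by blast
  obtain sp where sp: "\<forall>k\<in>carrier ?H. \<forall>a. (a + Psi (B1 (int p)) k) mod ?N = (a + k + int p * sp * k) mod ?N"
    using psi_t[OF assms(1,2) bpc] by blast
  have cf: "B1 ((1 + k + int p * s1 * k) mod ?N) = B2 ((1 + k + int p * s1 * k) mod ?N)"
    if "k \<in> carrier ?H" "B1 k = B2 k" for k
  proof -
    have "B1 ((1 + k + int p * s1 * k) mod ?N) = B1 ((1 + Psi (B1 1) k) mod ?N)" using s1 that by simp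
    also have "\<dots> = B1 1 \<otimes>\<^bsub>?G\<^esub> B1 k" using rb_unfold(2)[OF rb1 one that(1)] by simp
    also have "\<dots> = B2 1 \<otimes>\<^bsub>?G\<^esub> B2 k" using e1 that by simp
    also have "\<dots> = B2 ((1 + Psi (B2 1) k) mod ?N)" using rb_unfold(2)[OF rb2 one that(1)] by simp
    also have "\<dots> = B2 ((1 + k + int p * s1 * k) mod ?N)" using s1 that e1 by simp
    finally show ?thesis .
  qed
  have cg: "B1 ((int p + k + int p * sp * k) mod ?N) = B2 ((int p + k + int p * sp * k) mod ?N)"
    if "k \<in> carrier ?H" "B1 k = B2 k" for k
  proof -
    have "B1 ((int p + k + int p * sp * k) mod ?N) = B1 ((int p + Psi (B1 (int p)) k) mod ?N)" using sp that by simp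
    also have "\<dots> = B1 (int p) \<otimes>\<^bsub>?G\<^esub> B1 k" using rb_unfold(2)[OF rb1 pc that(1)] by simp
    also have "\<dots> = B2 (int p) \<otimes>\<^bsub>?G\<^esub> B2 k" using ep that by simp
    also have "\<dots> = B2 ((int p + Psi (B2 (int p)) k) mod ?N)" using rb_unfold(2)[OF rb2 pc that(1)] by simp
    also have "\<dots> = B2 ((int p + k + int p * sp * k) mod ?N)" using sp that ep by simp
    finally show ?thesis .
  qed
  have A: "B1 ((int m * int p) mod ?N) = B2 ((int m * int p) mod ?N)" for m :: nat
  proof (induction m)
    case 0
    then show ?case using rb_zero[OF assms(1,2) rb1] rb_zero[OF assms(1,2) rb2] by simp
  next
    case (Suc m)
    let ?k = "(int m * int p) mod ?N"
    have kc: "?k \<in> carrier ?H" using mod_in_H[OF p0] .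
    have "(int p + ?k + int p * sp * ?k) mod ?N = (int p + int m * int p + int p * sp * (int m * int p)) mod ?N"
      using modlem[of "int p" "int m * int p" ?N "int p * sp"] by simp
    also have "int p + int m * int p + int p * sp * (int m * int p) = int (Suc m) * int p + ?N * (sp * int m)"
      by (simp add: algebra_simps power2_eq_square)
    also have "(int (Suc m) * int p + ?N * (sp * int m)) mod ?N = (int (Suc m) * int p) mod ?N"
      by simp
    finally have eq: "(int p + ?k + int p * sp * ?k) mod ?N = (int (Suc m) * int p) mod ?N" .
    show ?case using cg[OF kc Suc] eq by simp
  qed
  let ?u = "1 + int p * s1"
  have Bm: "B1 ((Fseq ?u a + int m * int p) mod ?N) = B2 ((Fseq ?u a + int m * int p) mod ?N)" for a m :: nat
  proof (induction a arbitrary: m)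
    case 0
    then show ?case using A by simp
  next
    case (Suc a)
    let ?k = "(Fseq ?u a + int m * int p) mod ?N"
    have kc: "?k \<in> carrier ?H" using mod_in_H[OF p0] .
    have "(1 + ?k + int p * s1 * ?k) mod ?N = (1 + (Fseq ?u a + int m * int p) + int p * s1 * (Fseq ?u a + int m * int p)) mod ?N"
      using modlem[of 1 "Fseq ?u a + int m * int p" ?N "int p * s1"] by simp
    also have "1 + (Fseq ?u a + int m * int p) + int p * s1 * (Fseq ?u a + int m * int p)
       = Fseq ?u (Suc a) + int m * int p + ?N * (s1 * int m)"
      by (simp add: algebra_simps power2_eq_square)
    also have "(Fseq ?u (Suc a) + int m * int p + ?N * (s1 * int m)) mod ?N = (Fseq ?u (Suc a) + int m * int p) mod ?N"
      by simp
    finally have eq: "(1 + ?k + int p * s1 * ?k) mod ?N = (Fseq ?u (Suc a) + int m * int p) mod ?N" .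
    show ?case using cf[OF kc Suc] eq by simp
  qed
  define a where "a = nat (h mod int p)"
  have ai: "int a = h mod int p" using p0 by (simp add: a_def)
  have "[Fseq ?u a = int a] (mod int p)" by (rule Fseq_modp)
  moreover have "[int a = h] (mod int p)" using ai by (simp add: cong_def)
  ultimately have "[Fseq ?u a = h] (mod int p)" by (rule cong_trans)
  hence "int p dvd h - Fseq ?u a" by (metis cong_iff_dvd_diff cong_sym)
  then obtain c where c: "h - Fseq ?u a = int p * c" by (auto simp: dvd_def)
  define m where "m = nat (c mod int p)"
  have "int m = c mod int p" using p0 by (simp add: m_def)
  hence mi: "int m = c - int p * (c div int p)" by (metis minus_div_mult_eq_mod mult.commute)
  have hh: "h = Fseq ?u a + int p * c" using c by simp
  have "Fseq ?u a + int m * int p = h + ?N * (- (c div int p))"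
    unfolding mi hh by (simp add: algebra_simps power2_eq_square)
  hence "(Fseq ?u a + int m * int p) mod ?N = h mod ?N" by (simp add: mod_eq_dvd_iff)
  also have "\<dots> = h" using hc p0 by (simp add: carrier_H)
  finally show ?thesis using Bm[of a m] by simp
qed

lemma part2:
  assumes "Factorial_Ring.prime p"
    and "Psi \<in> hom (integer_mod_group p \<times>\<times> integer_mod_group p) (AutoGroup (integer_mod_group (p ^ 2)))"
    and rb: "rel_RB_operator (integer_mod_group (p ^ 2)) (integer_mod_group p \<times>\<times> integer_mod_group p) Psi B"
    and p2: "p > 2"
  shows "B \<in> hom (integer_mod_group (p ^ 2)) (integer_mod_group p \<times>\<times> integer_mod_group p)"
proof -
  let ?G = "integer_mod_group p \<times>\<times> integer_mod_group p"
  let ?H = "integer_mod_group (p ^ 2)"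
  let ?N = "(int p) ^ 2"
  have p1: "p > 1" using assms(1) prime_gt_1_nat by blast
  hence p0: "p > 0" by simp
  have pN: "int p < ?N" using p1 by (simp add: power2_eq_square)
  have one: "1 \<in> carrier ?H" using p1 by (simp add: carrier_H power2_eq_square)
  have pc: "int p \<in> carrier ?H" using p1 pN by (simp add: carrier_H)
  have gG: "group ?G" by (simp add: DirProd_group)
  have Bc: "B \<in> carrier ?H \<rightarrow> carrier ?G" by (rule rb_unfold(1)[OF rb])
  have b1c: "B 1 \<in> carrier ?G" using Bc one by blast
  obtain s1 where s1: "\<forall>k\<in>carrier ?H. \<forall>a. (a + Psi (B 1) k) mod ?N = (a + k + int p * s1 * k) mod ?N"
    using psi_t[OF assms(1,2) b1c] by blast
  let ?u = "1 + int p * s1"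
  have C: "B ((Fseq ?u n) mod ?N) = B 1 [^]\<^bsub>?G\<^esub> n" for n
  proof (induction n)
    case 0
    then show ?case using rb_zero[OF assms(1,2) rb] by simp
  next
    case (Suc n)
    let ?k = "Fseq ?u n mod ?N"
    have kc: "?k \<in> carrier ?H" using mod_in_H[OF p0] .
    have "B 1 \<otimes>\<^bsub>?G\<^esub> B ?k = B ((1 + Psi (B 1) ?k) mod ?N)" using rb_unfold(2)[OF rb one kc] .
    also have "(1 + Psi (B 1) ?k) mod ?N = (1 + ?k + int p * s1 * ?k) mod ?N" using s1 kc by blast
    also have "\<dots> = (1 + Fseq ?u n + int p * s1 * Fseq ?u n) mod ?N"
      using modlem[of 1 "Fseq ?u n" ?N "int p * s1"] by simp
    also have "1 + Fseq ?u n + int p * s1 * Fseq ?u n = Fseq ?u (Suc n)" by (simp add: algebra_simps)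
    finally have "B (Fseq ?u (Suc n) mod ?N) = B 1 \<otimes>\<^bsub>?G\<^esub> B 1 [^]\<^bsub>?G\<^esub> n" using Suc by simp
    also have "\<dots> = B 1 [^]\<^bsub>?G\<^esub> Suc n"
      using monoid.nat_pow_Suc2[OF group.is_monoid[OF gG] b1c] by simp
    finally show ?case .
  qed
  obtain x y where xy: "B 1 = (x, y)" by (cases "B 1")
  have b1p: "B 1 [^]\<^bsub>?G\<^esub> p = \<one>\<^bsub>?G\<^esub>" by (simp only: xy DirProd_pow) simp
  have "odd p" using prime_odd_nat[OF assms(1) p2] .
  then obtain r where r: "p = 2 * r + 1" using oddE by blast
  have "2 * Dseq p = p * (p - 1)" by (rule Dseq_twice)
  hence Dp: "Dseq p = p * r" using r by simp
  have "[Fseq ?u p = int p + int p * s1 * int (Dseq p)] (mod ?N)" by (rule Fseq_modN)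
  also have "int p + int p * s1 * int (Dseq p) = int p + ?N * (s1 * int r)"
    using Dp by (simp add: algebra_simps power2_eq_square)
  also have "[\<dots> = int p] (mod ?N)" by (simp add: cong_def)
  finally have "Fseq ?u p mod ?N = int p mod ?N" by (simp add: cong_def)
  also have "\<dots> = int p" using pN by simp
  finally have Fp: "Fseq ?u p mod ?N = int p" .
  have Bp: "B (int p) = \<one>\<^bsub>?G\<^esub>" using C[of p] Fp b1p by simp
  have per: "B ((x + int p) mod ?N) = B x" if xc: "x \<in> carrier ?H" for x
  proof -
    have bxc: "B x \<in> carrier ?G" using Bc xc by blast
    obtain t where t: "\<forall>k\<in>carrier ?H. \<forall>a. (a + Psi (B x) k) mod ?N = (a + k + int p * t * k) mod ?N"
      using psi_t[OF assms(1,2) bxc] by blast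
    have ro: "B x \<otimes>\<^bsub>?G\<^esub> \<one>\<^bsub>?G\<^esub> = B x" by (rule monoid.r_one[OF group.is_monoid[OF gG] bxc])
    have "B x = B x \<otimes>\<^bsub>?G\<^esub> B (int p)" by (simp only: Bp ro)
    also have "\<dots> = B ((x + Psi (B x) (int p)) mod ?N)" using rb_unfold(2)[OF rb xc pc] .
    also have "(x + Psi (B x) (int p)) mod ?N = (x + int p + int p * t * int p) mod ?N" using t pc by blast
    also have "x + int p + int p * t * int p = (x + int p) + ?N * t" by (simp add: algebra_simps power2_eq_square)
    also have "((x + int p) + ?N * t) mod ?N = (x + int p) mod ?N" by simp
    finally show ?thesis by simp
  qed
  have perm: "\<forall>r. 0 \<le> r \<and> r < int p \<longrightarrow> B ((r + int m * int p) mod ?N) = B r" for m :: nat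
  proof (induction m)
    case 0
    show ?case
    proof (intro allI impI)
      fix r assume rr: "0 \<le> r \<and> r < int p"
      have "r < ?N" using rr pN by linarith
      hence "r mod ?N = r" using rr by (intro mod_pos_pos_trivial) auto
      thus "B ((r + int 0 * int p) mod ?N) = B r" by simp
    qed
  next
    case (Suc m)
    show ?case
    proof (intro allI impI)
      fix r assume rr: "0 \<le> r \<and> r < int p"
      let ?k = "(r + int m * int p) mod ?N"
      have kc: "?k \<in> carrier ?H" using mod_in_H[OF p0] .
      have "(?k + int p) mod ?N = (r + int m * int p + int p) mod ?N" by (rule mod_add_left_eq)
      also have "r + int m * int p + int p = r + int (Suc m) * int p" by (simp add: algebra_simps)
      finally have "(r + int (Suc m) * int p) mod ?N = (?k + int p) mod ?N" by simp
      hence "B ((r + int (Suc m) * int p) mod ?N) = B ?k" using per[OF kc] by simp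
      also have "\<dots> = B r" using Suc rr by blast
      finally show "B ((r + int (Suc m) * int p) mod ?N) = B r" .
    qed
  qed
  have red: "B z = B (z mod int p)" if zc: "z \<in> carrier ?H" for z
  proof -
    have z0: "0 \<le> z" "z < ?N" using zc p0 by (auto simp: carrier_H)
    define m where "m = nat (z div int p)"
    have "0 \<le> z div int p" using z0 p0 by (simp add: pos_imp_zdiv_nonneg_iff)
    hence mi: "int m = z div int p" by (simp add: m_def)
    have "z mod int p + int m * int p = z" using mi by simp
    hence "z = (z mod int p + int m * int p) mod ?N" using z0 by simp
    also have "B \<dots> = B (z mod int p)" using perm[of m] p0 by simp
    finally show ?thesis by simp
  qed
  have dN: "int p dvd ?N" by simp
  show ?thesis
  proof (rule homI)
    fix z assume "z \<in> carrier ?H" thus "B z \<in> carrier ?G" using Bc by blast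
  next
    fix z w assume zc: "z \<in> carrier ?H" and wc: "w \<in> carrier ?H"
    have bzc: "B z \<in> carrier ?G" using Bc zc by blast
    obtain t where t: "\<forall>k\<in>carrier ?H. \<forall>a. (a + Psi (B z) k) mod ?N = (a + k + int p * t * k) mod ?N"
      using psi_t[OF assms(1,2) bzc] by blast
    have "B z \<otimes>\<^bsub>?G\<^esub> B w = B ((z + Psi (B z) w) mod ?N)" using rb_unfold(2)[OF rb zc wc] .
    also have "(z + Psi (B z) w) mod ?N = (z + w + int p * t * w) mod ?N" using t wc by blast
    also have "B \<dots> = B ((z + w + int p * t * w) mod ?N mod int p)" using red mod_in_H[OF p0] by blast
    also have "(z + w + int p * t * w) mod ?N mod int p = (z + w + int p * t * w) mod int p"
      using mod_mod_cancel[OF dN] by blast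
    also have "z + w + int p * t * w = (z + w) + int p * (t * w)" by (simp add: algebra_simps)
    also have "((z + w) + int p * (t * w)) mod int p = (z + w) mod int p" by simp
    also have "\<dots> = (z + w) mod ?N mod int p" using mod_mod_cancel[OF dN] by simp
    also have "B \<dots> = B ((z + w) mod ?N)" using red mod_in_H[OF p0] by simp
    finally show "B (z \<otimes>\<^bsub>?H\<^esub> w) = B z \<otimes>\<^bsub>?G\<^esub> B w" by simp
  qed
qed

theorem theorem4p4:
  fixes p :: nat and Psi :: "int \<times> int \<Rightarrow> int \<Rightarrow> int"
  assumes "Factorial_Ring.prime p"
    and "Psi \<in> hom (integer_mod_group p \<times>\<times> integer_mod_group p)
                   (AutoGroup (integer_mod_group (p ^ 2)))"
  shows "(\<forall>b1 bp B1 B2.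
            rel_RB_operator (integer_mod_group (p ^ 2)) (integer_mod_group p \<times>\<times> integer_mod_group p) Psi B1 \<and>
            rel_RB_operator (integer_mod_group (p ^ 2)) (integer_mod_group p \<times>\<times> integer_mod_group p) Psi B2 \<and>
            B1 1 = b1 \<and> B1 (int p) = bp \<and> B2 1 = b1 \<and> B2 (int p) = bp
            \<longrightarrow> (\<forall>h \<in> carrier (integer_mod_group (p ^ 2)). B1 h = B2 h))
       \<and> (p > 2 \<longrightarrow>
            (\<forall>B. rel_RB_operator (integer_mod_group (p ^ 2)) (integer_mod_group p \<times>\<times> integer_mod_group p) Psi B
               \<longrightarrow> B \<in> hom (integer_mod_group (p ^ 2)) (integer_mod_group p \<times>\<times> integer_mod_group p)))"
  proof (intro conjI allI impI)
  fix b1 bp B1 B2 assume H: "rel_RB_operator (integer_mod_group (p ^ 2)) (integer_mod_group p \<times>\<times> integer_mod_group p) Psi B1 \<and>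
            rel_RB_operator (integer_mod_group (p ^ 2)) (integer_mod_group p \<times>\<times> integer_mod_group p) Psi B2 \<and>
            B1 1 = b1 \<and> B1 (int p) = bp \<and> B2 1 = b1 \<and> B2 (int p) = bp"
  show "\<forall>h \<in> carrier (integer_mod_group (p ^ 2)). B1 h = B2 h"
    using part1[OF assms] H by metis
next
  fix B assume "p > 2" "rel_RB_operator (integer_mod_group (p ^ 2)) (integer_mod_group p \<times>\<times> integer_mod_group p) Psi B"
  thus "B \<in> hom (integer_mod_group (p ^ 2)) (integer_mod_group p \<times>\<times> integer_mod_group p)"
    using part2[OF assms] by blast
qed

end
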